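(* Let $q$ be an odd prime power and $n\ge 1$ an integer, and let $\mu\in\mathbb{F}_{q^2}$ with $\mu^2=-1$. (i) If $q\equiv1\pmod 4$ and $\gcd(n+1,q(q^2-1)/2)=1$, then $C_n(a)$ is LCD for every $a\in\mathbb{F}_q\setminus\{\mu+2,-\mu+2,\mu-2,-\mu-2\}$. (ii) If $q\equiv 3\pmod 4$, $\gcd(n+1,q)=1$, and $\gcd(n+1,(q^4-1)/2)$ divides $(q-1)/2$, then $C_n(a)$ is LCD for every $a\in\mathbb{F}_q$.
   Context: For $a\in\mathbb{F}_q$ and $n \ge 1$, $T_n(a)$ denotes the $n\times n$ symmetric tridiagonal Toeplitz matrix over $\mathbb{F}_q$ with all diagonal entries equal to $a$, all entries on the first super- and sub-diagonals equal to $1$, and all other entries $0$. $C_n(a)$ is the $[2n,n]$ linear code over $\mathbb{F}_q$ with generator matrix $[I_n \mid T_n(a)]$. A linear code $C$ is LCD if $C\cap C^\perp=\{0\}$ (Euclidean dual). *)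

theory Defs
  imports "Jordan_Normal_Form.Matrix"
begin

definition tridiag_toeplitz :: "nat \<Rightarrow> 'a::field \<Rightarrow> 'a mat" where
  "tridiag_toeplitz n a = mat n n (\<lambda>(i,j). if i = j then a
      else if i = j + 1 \<or> j = i + 1 then 1 else 0)"

definition gen_matrix :: "nat \<Rightarrow> 'a::field \<Rightarrow> 'a mat" where
  "gen_matrix n a = mat n (2*n) (\<lambda>(i,j). if j < n then (if i = j then 1 else 0)
      else tridiag_toeplitz n a $$ (i, j - n))"

definition code_of :: "'a::field mat \<Rightarrow> 'a vec set" where
  "code_of G = {transpose_mat G *\<^sub>v x | x. x \<in> carrier_vec (dim_row G)}"

definition dual_code :: "nat \<Rightarrow> 'a::field vec set \<Rightarrow> 'a vec set" where
  "dual_code N C = {y \<in> carrier_vec N. \<forall>c\<in>C. scalar_prod c y = 0}"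

definition is_LCD :: "nat \<Rightarrow> 'a::field vec set \<Rightarrow> bool" where
  "is_LCD N C \<longleftrightarrow> C \<inter> dual_code N C = {0\<^sub>v N}"

definition C_code :: "nat \<Rightarrow> 'a::field \<Rightarrow> 'a vec set" where
  "C_code n a = code_of (gen_matrix n a)"

end

theory Submission
  imports Defs "HOL-Algebra.Algebraic_Closure_Type" "HOL-Algebra.Sylow" "HOL-Number_Theory.Residues"
begin


lemma prime_only_factor_power:
  fixes q p :: nat
  assumes "0 < q" "\<And>r. normalization_semidom_class.prime r \<Longrightarrow> r dvd q \<Longrightarrow> r = p"
  shows "\<exists>k. q = p ^ k"
  using assms
proof (induction q rule: less_induct)
  case (less q)
  show ?case
  proof (cases "q = 1")
    case True then show ?thesis by (intro exI[of _ 0]) simp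
  next
    case False
    then obtain r where r: "normalization_semidom_class.prime r" "r dvd q"
      using prime_factor_nat by blast
    then have rp: "r = p" using less.prems by blast
    then obtain q' where q': "q = p * q'" using r by (auto elim: dvdE)
    have pos: "0 < q'" using less.prems(1) q' by auto
    have lt: "q' < q" using q' r rp pos prime_gt_1_nat[of p] by auto
    have "\<exists>k. q' = p ^ k"
      using lt pos less.prems(2) q' by (intro less.IH) auto
    then obtain k where "q' = p ^ k" by blast
    then show ?thesis using q' by (intro exI[of _ "Suc k"]) simp
  qed
qed

lemma add_group_pow:
  fixes x :: "'a::ring_1"
  shows "x [^]\<^bsub>\<lparr>carrier = H, mult = (+), one = (0::'a)\<rparr>\<^esub> (n::nat) = of_nat n * x"
  by (induction n) (simp_all add: nat_pow_def algebra_simps)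

lemma card_prime_power:
  shows "\<exists>k. card (UNIV :: 'a::{finite,field} set) = CHAR('a) ^ k"
proof (rule prime_only_factor_power)
  show "0 < card (UNIV :: 'a set)" by (rule finite_UNIV_card_ge_0) simp
next
  fix r :: nat assume r: "normalization_semidom_class.prime r" "r dvd card (UNIV :: 'a set)"
  define G where "G = \<lparr> carrier = (UNIV :: 'a set), monoid.mult = (+), one = (0 :: 'a) \<rparr>"
  have grp: "group G"
  proof (rule groupI)
    fix x assume x: "x \<in> carrier G"
    show "\<exists>y\<in>carrier G. y \<otimes>\<^bsub>G\<^esub> x = \<one>\<^bsub>G\<^esub>"
      by (intro bexI[of _ "-x"]) (auto simp: G_def)
  qed (auto simp: G_def add_ac)
  obtain m where m: "card (UNIV :: 'a set) = r * m" using r by (auto elim: dvdE)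
  have "\<exists>H. subgroup H G \<and> card H = r ^ 1"
    by (rule sylow_thm[OF r(1) grp, of 1 m]) (auto simp: G_def Coset.order_def m)
  then obtain H where H: "subgroup H G" "card H = r" by auto
  have "card H \<ge> 2" using H r prime_ge_2_nat by auto
  have "\<not> H \<subseteq> {0}"
  proof
    assume "H \<subseteq> {0}"
    then have "card H \<le> card {0::'a}" by (intro card_mono) auto
    then show False using \<open>card H \<ge> 2\<close> by simp
  qed
  then obtain h where h: "h \<in> H" "h \<noteq> 0" by blast
  have g2: "group (G\<lparr>carrier := H\<rparr>)" by (rule subgroup.subgroup_is_group[OF H(1) grp])
  have "h [^]\<^bsub>G\<lparr>carrier := H\<rparr>\<^esub> Coset.order (G\<lparr>carrier := H\<rparr>) = \<one>\<^bsub>G\<lparr>carrier := H\<rparr>\<^esub>"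
    by (rule group.pow_order_eq_1[OF g2]) (simp add: h)
  then have "of_nat r * h = 0"
    using H(2) by (simp add: G_def Coset.order_def add_group_pow)
  then have "of_nat r = (0::'a)" using h by simp
  then have "CHAR('a) dvd r" by (simp add: of_nat_eq_0_iff_char_dvd)
  moreover have "normalization_semidom_class.prime CHAR('a)" by (rule prime_CHAR_semidom) (simp add: finite_imp_CHAR_pos)
  ultimately show "r = CHAR('a)" using r(1) by (metis primes_dvd_imp_eq)
qed

lemma finite_field_pow_card:
  fixes x :: "'a::{finite,field}"
  shows   "x ^ card (UNIV :: 'a set) = x"
proof (cases "x = 0")
  case False
  have "x * (\<Prod>y\<in>UNIV-{0}. x * y) = x * x ^ (card (UNIV :: 'a set) - 1) * \<Prod>(UNIV-{0})"
    by (simp add: prod.distrib mult_ac)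
  also have "x * x ^ (card (UNIV :: 'a set) - 1) = x ^ Suc (card (UNIV :: 'a set) - 1)"
    by (subst power_Suc) auto
  also have "Suc (card (UNIV :: 'a set) - 1) = card (UNIV :: 'a set)"
    using finite_UNIV_card_ge_0[where ?'a = 'a] by simp
  also have "(\<Prod>y\<in>UNIV-{0}. x * y) = (\<Prod>y\<in>UNIV-{0}. y)"
    by (rule prod.reindex_bij_witness[of _ "\<lambda>y. y / x" "\<lambda>y. x * y"]) (use False in auto)
  finally show ?thesis
    by simp
qed (use finite_UNIV_card_ge_0[where ?'a = 'a] in auto)



lemma nat_induct_012:
  assumes "P 0" "P (Suc 0)" "\<And>k. P k \<Longrightarrow> P (Suc k) \<Longrightarrow> P (Suc (Suc k))"
  shows "P n"
proof -
  have "P n \<and> P (Suc n)" by (induction n) (use assms in auto)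
  then show ?thesis by simp
qed

fun Eseq :: "'b::comm_ring_1 \<Rightarrow> nat \<Rightarrow> 'b" where
  "Eseq s 0 = 0"
| "Eseq s (Suc 0) = 1"
| "Eseq s (Suc (Suc k)) = s * Eseq s (Suc k) - Eseq s k"

lemma Eseq_t:
  fixes t :: "'b::field"
  assumes "t \<noteq> 0"
  shows "(t - inverse t) * Eseq (t + inverse t) k = t ^ k - inverse t ^ k"
proof (induction k rule: nat_induct_012)
  case (3 k)
  have "(t - inverse t) * Eseq (t + inverse t) (Suc (Suc k))
      = (t + inverse t) * ((t - inverse t) * Eseq (t + inverse t) (Suc k))
        - (t - inverse t) * Eseq (t + inverse t) k"
    by (simp add: algebra_simps)
  also have "\<dots> = (t + inverse t) * (t ^ Suc k - inverse t ^ Suc k) - (t ^ k - inverse t ^ k)"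
    using 3 by simp
  also have "\<dots> = t ^ Suc (Suc k) - inverse t ^ Suc (Suc k)"
  proof -
    have h1: "inverse t * (t * t ^ k) = t ^ k" using assms by (simp add: mult.assoc[symmetric])
    have h2: "t * (inverse t * inverse t ^ k) = inverse t ^ k" using assms by (simp add: mult.assoc[symmetric])
    have "(t + inverse t) * (t ^ Suc k - inverse t ^ Suc k) - (t ^ k - inverse t ^ k)
       = t * (t * t ^ k) + inverse t * (t * t ^ k) - t * (inverse t * inverse t ^ k)
         - inverse t * (inverse t * inverse t ^ k) - (t ^ k - inverse t ^ k)"
      by (simp add: algebra_simps)
    also have "\<dots> = t * (t * t ^ k) - inverse t * (inverse t * inverse t ^ k)"
      by (simp only: h1 h2) simp
    also have "\<dots> = t ^ Suc (Suc k) - inverse t ^ Suc (Suc k)" by (simp only: power_Suc)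
    finally show ?thesis .
  qed
  finally show ?case .
qed simp_all

lemma Eseq_pm1:
  fixes t :: "'b::field"
  assumes "t * t = 1"
  shows "Eseq (2 * t) k * t = of_nat k * t ^ k"
proof (induction k rule: nat_induct_012)
  case (3 k)
  have tk: "t ^ k = t ^ Suc (Suc k)"
  proof -
    have "t ^ Suc (Suc k) = (t * t) * t ^ k" by (simp add: mult.assoc)
    then show ?thesis using assms by simp
  qed
  have "Eseq (2 * t) (Suc (Suc k)) * t = 2 * t * (Eseq (2 * t) (Suc k) * t) - Eseq (2 * t) k * t"
    by (simp add: algebra_simps)
  also have "\<dots> = 2 * t * (of_nat (Suc k) * t ^ Suc k) - of_nat k * t ^ k"
    by (simp only: 3)
  also have "\<dots> = 2 * t * (of_nat (Suc k) * t ^ Suc k) - of_nat k * t ^ Suc (Suc k)"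
    by (simp only: tk)
  also have "\<dots> = of_nat (Suc (Suc k)) * t ^ Suc (Suc k)"
    by (simp add: algebra_simps)
  finally show ?case .
qed simp_all

definition Tm :: "nat \<Rightarrow> 'b::comm_ring_1 \<Rightarrow> (nat \<Rightarrow> 'b) \<Rightarrow> nat \<Rightarrow> 'b" where
  "Tm n b Y i = (if 0 < i then Y (i - 1) else 0) + b * Y i + (if i + 1 < n then Y (i + 1) else 0)"

lemma eigen_Eseq:
  fixes Y :: "nat \<Rightarrow> 'b::field"
  assumes eig: "\<And>i. i < n \<Longrightarrow> Tm n b Y i = \<nu> * Y i"
    and nz: "i0 < n" "Y i0 \<noteq> 0"
  shows "Eseq (\<nu> - b) (n + 1) = 0"
proof -
  define s where "s = \<nu> - b"
  define Z where "Z k = (if 1 \<le> k \<and> k \<le> n then Y (k - 1) else 0)" for k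
  have main: "k \<le> n + 1 \<Longrightarrow> Z k = Z 1 * Eseq s k" for k
  proof (induction k rule: nat_induct_012)
    case 1 then show ?case by (simp add: Z_def)
  next
    case 2 then show ?case by simp
  next
    case (3 j)
    have jn: "j < n" using 3(3) by simp
    have e: "Tm n b Y j = \<nu> * Y j" using eig jn by simp
    have a1: "(if 0 < j then Y (j - 1) else 0) = Z j" using jn by (auto simp: Z_def)
    have a2: "Y j = Z (Suc j)" using jn by (simp add: Z_def)
    have a3: "(if j + 1 < n then Y (j + 1) else 0) = Z (Suc (Suc j))" using 3(3) by (auto simp: Z_def)
    have "Z (Suc (Suc j)) = s * Z (Suc j) - Z j"
      using e unfolding Tm_def a1 a2 a3 s_def by (simp add: algebra_simps)
    also have "\<dots> = Z 1 * Eseq s (Suc (Suc j))"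
      using 3(1,2) 3(3) by (simp add: algebra_simps)
    finally show ?case .
  qed
  have "Z 1 \<noteq> 0"
  proof
    assume z: "Z 1 = 0"
    have "Z (Suc i0) = 0" using main[of "Suc i0"] nz z by simp
    then show False using nz by (simp add: Z_def)
  qed
  moreover have "Z (n + 1) = 0" by (simp add: Z_def)
  ultimately show ?thesis using main[of "n+1"] by (simp add: s_def)
qed

lemma Tm_lin: "Tm n b (\<lambda>i. f i - c * g i) i = Tm n b f i - c * Tm n b g i"
  by (simp add: Tm_def algebra_simps)

lemma sq_eigen:
  fixes Xv :: "nat \<Rightarrow> 'b::field" and lm :: 'b
  assumes eq: "\<And>i. i < n \<Longrightarrow> Xv i + Tm n b (Tm n b Xv) i = 0"
    and nz: "i0 < n" "Xv i0 \<noteq> 0"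
    and lam: "lm ^ 2 = -1"
  shows "\<exists>\<nu>. \<nu> ^ 2 = -1 \<and> Eseq (\<nu> - b) (n + 1) = 0"
proof (cases "\<exists>i<n. Tm n b Xv i - lm * Xv i \<noteq> 0")
  case True
  then obtain i1 where i1: "i1 < n" "Tm n b Xv i1 - lm * Xv i1 \<noteq> 0" by blast
  define W where "W i = Tm n b Xv i - lm * Xv i" for i
  have "Tm n b W i = (- lm) * W i" if "i < n" for i
  proof -
    have "Tm n b W i = Tm n b (Tm n b Xv) i - lm * Tm n b Xv i"
      unfolding W_def by (rule Tm_lin)
    also have "\<dots> = - Xv i - lm * Tm n b Xv i"
    proof -
      have "Tm n b (Tm n b Xv) i = - Xv i" using eq[OF that] by (simp add: add_eq_0_iff)
      then show ?thesis by simp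
    qed
    also have "\<dots> = (- lm) * W i"
    proof -
      have "(- lm) * W i = - (lm * Tm n b Xv i) + (lm * lm) * Xv i" by (simp add: W_def algebra_simps)
      also have "\<dots> = - Xv i - lm * Tm n b Xv i" using lam by (simp add: power2_eq_square)
      finally show ?thesis by simp
    qed
    finally show ?thesis .
  qed
  then have "Eseq (- lm - b) (n + 1) = 0"
    by (rule eigen_Eseq[of n b W "-lm" i1]) (use i1 in \<open>simp_all add: W_def\<close>)
  then show ?thesis using lam by (intro exI[of _ "-lm"]) simp
next
  case False
  then have "Tm n b Xv i = lm * Xv i" if "i < n" for i using that by auto
  then have "Eseq (lm - b) (n + 1) = 0"
    by (rule eigen_Eseq[of n b Xv lm i0]) (use nz in simp_all)
  then show ?thesis using lam by blast
qed



lemma pow_gcd_one: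
  fixes t :: "'b::field"
  assumes "t ^ a = 1" "t ^ b = 1"
  shows "t ^ gcd a b = 1"
proof (cases "a = 0")
  case True then show ?thesis using assms by simp
next
  case False
  then obtain x y where xy: "a * x = b * y + gcd a b" using bezout_nat by blast
  have "1 = t ^ (a * x)" using assms by (simp add: power_mult)
  also have "\<dots> = t ^ (b * y) * t ^ gcd a b" by (simp add: xy power_add)
  also have "\<dots> = t ^ gcd a b" using assms by (simp add: power_mult)
  finally show ?thesis by simp
qed

lemma pow_dvd_one:
  fixes t :: "'b::field"
  assumes "t ^ g = 1" "g dvd m"
  shows "t ^ m = 1"
proof -
  obtain c where "m = g * c" using assms by (auto elim: dvdE)
  then show ?thesis using assms by (simp add: power_mult)
qed

lemma frob_root:
  fixes t u :: "'b::field"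
  assumes "t \<noteq> 0" "u \<noteq> 0" "u + inverse u = t + inverse t"
  shows "u = t \<or> u = inverse t"
proof -
  have "u * u + 1 = u * (u + inverse u)" using assms(2) by (simp add: distrib_left)
  also have "\<dots> = u * (t + inverse t)" by (simp only: assms(3))
  also have "\<dots> = u * t + u * inverse t" by (simp add: distrib_left)
  finally have e: "u * u + 1 = u * t + u * inverse t" .
  have "(u - t) * (u - inverse t) = u * u - u * inverse t - t * u + t * inverse t"
    by (simp add: algebra_simps)
  also have "\<dots> = 0" using e assms by (simp add: algebra_simps)
  finally show ?thesis by simp
qed

lemma frob_fix:
  fixes t :: "'b::field"
  assumes add: "\<And>x y :: 'b. (x + y) ^ m = x ^ m + y ^ m"
    and t: "t \<noteq> 0" and fx: "(t + inverse t) ^ m = t + inverse t" and m: "m \<ge> 1"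
  shows "t ^ (m - 1) = 1 \<or> t ^ (m + 1) = 1"
proof -
  have "t ^ m + inverse (t ^ m) = t + inverse t"
    using fx add[of t "inverse t"] by (simp add: power_inverse)
  then have "t ^ m = t \<or> t ^ m = inverse t" using t by (intro frob_root) auto
  moreover have "t ^ m = t ^ (m - 1) * t" using m by (simp flip: power_Suc2)
  ultimately show ?thesis using t by (auto simp: field_simps)
qed

lemma root_props:
  fixes s t :: "'b::field"
  assumes r: "t * t - s * t + 1 = 0" and E: "Eseq s N = 0" and N: "of_nat N \<noteq> (0::'b)"
  shows "t \<noteq> 0 \<and> s = t + inverse t \<and> t * t \<noteq> 1 \<and> t ^ (2 * N) = 1"
proof -
  have t0: "t \<noteq> 0" using r by auto
  have s: "s = t + inverse t"
  proof -
    have "s * t = t * t + 1" using r by (simp add: algebra_simps)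
    then have "s = (t * t + 1) / t" using t0 by (simp add: field_simps)
    then show ?thesis using t0 by (simp add: field_simps)
  qed
  have tt: "t * t \<noteq> 1"
  proof
    assume tt: "t * t = 1"
    then have "inverse t = t" using t0 by (simp add: field_simps)
    then have "s = 2 * t" using s by simp
    then have "Eseq s N * t = of_nat N * t ^ N" using Eseq_pm1[OF tt, of N] by simp
    then show False using E N t0 by simp
  qed
  have "t - inverse t \<noteq> 0"
  proof
    assume "t - inverse t = 0"
    then have "t * t = t * inverse t" by simp
    then show False using tt t0 by simp
  qed
  moreover have "(t - inverse t) * Eseq s N = t ^ N - inverse t ^ N"
    using Eseq_t[OF t0, of N] s by simp
  ultimately have "t ^ N = inverse t ^ N" using E by simp
  then have "t ^ (2 * N) = t ^ N * inverse t ^ N" by (simp add: mult_2 power_add)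
  also have "\<dots> = 1" using t0 by (simp add: power_inverse[symmetric] flip: power_mult_distrib)
  finally show ?thesis using t0 s tt by simp
qed

lemma sub_frob:
  fixes x y :: "'b::field"
  assumes add: "\<And>x y :: 'b. (x + y) ^ m = x ^ m + y ^ m"
  shows "(x - y) ^ m = x ^ m - y ^ m"
  using add[of "x - y" y] by (simp add: algebra_simps)

lemma core_i:
  fixes s t v b :: "'b::field" and Q N :: nat
  assumes add: "\<And>x y :: 'b. (x + y) ^ Q = x ^ Q + y ^ Q"
    and bQ: "b ^ Q = b" and v: "v ^ 2 = -1" and Q4: "Q mod 4 = 1"
    and E: "Eseq (v - b) N = 0" and N: "of_nat N \<noteq> (0::'b)"
    and r: "t * t - (v - b) * t + 1 = 0"
    and cop: "\<And>m. m = Q - 1 \<or> m = Q + 1 \<Longrightarrow> gcd (2 * N) m dvd 2"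
  shows False
proof -
  define s where "s = v - b"
  have P: "t \<noteq> 0" "s = t + inverse t" "t * t \<noteq> 1" "t ^ (2 * N) = 1"
    using root_props[OF r[folded s_def] E[folded s_def] N] by auto
  obtain k where k: "Q = 4 * k + 1" using Q4 by (metis mod_mult_div_eq add.commute mult.commute)
  have vQ: "v ^ Q = v"
  proof -
    have "v ^ Q = v * ((v ^ 2) ^ 2) ^ k" by (simp add: k power_add power_mult[symmetric] mult.commute)
    also have "\<dots> = v" using v by simp
    finally show ?thesis .
  qed
  have "s ^ Q = s" unfolding s_def using sub_frob[OF add] vQ bQ by simp
  then have "t ^ (Q - 1) = 1 \<or> t ^ (Q + 1) = 1"
    using frob_fix[OF add P(1)] P(2) k by simp
  then obtain m where m: "m = Q - 1 \<or> m = Q + 1" "t ^ m = 1" by blast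
  have "t ^ gcd (2 * N) m = 1" using pow_gcd_one[OF P(4) m(2)] .
  then have "t ^ 2 = 1" using cop[OF m(1)] by (rule pow_dvd_one)
  then show False using P(3) by (simp add: power2_eq_square)
qed

lemma core_ii:
  fixes s t v b :: "'b::field" and Q N :: nat
  assumes add: "\<And>x y :: 'b. (x + y) ^ Q = x ^ Q + y ^ Q"
    and bQ: "b ^ Q = b" and v: "v ^ 2 = -1" and Q4: "Q mod 4 = 3"
    and E: "Eseq (v - b) N = 0" and N: "of_nat N \<noteq> (0::'b)"
    and r: "t * t - (v - b) * t + 1 = 0"
    and two: "(2::'b) \<noteq> 0"
    and cop: "gcd (2 * N) (Q ^ 4 - 1) dvd Q - 1"
  shows False
proof -
  define s where "s = v - b"
  have P: "t \<noteq> 0" "s = t + inverse t" "t * t \<noteq> 1" "t ^ (2 * N) = 1"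
    using root_props[OF r[folded s_def] E[folded s_def] N] by auto
  obtain k where k: "Q = 4 * k + 3" using Q4 by (metis mod_mult_div_eq add.commute mult.commute)
  have vQ: "v ^ Q = - v"
  proof -
    have "Q = 2 * (2 * k + 1) + 1" using k by simp
    then have "v ^ Q = (v ^ 2) ^ (2 * k + 1) * v" by (simp only: power_add power_mult power_one_right)
    also have "\<dots> = - v" using v by simp
    finally show ?thesis .
  qed
  have oddQ: "odd Q" using k by simp
  have negQ: "(- x) ^ Q = - (x ^ Q)" for x :: 'b using oddQ by (simp add: power_minus_odd)
  have sQ: "s ^ Q = - v - b" unfolding s_def using sub_frob[OF add] vQ bQ by simp
  have add2: "(x + y) ^ (Q * Q) = x ^ (Q * Q) + y ^ (Q * Q)" for x y :: 'b
    by (simp add: power_mult add)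
  have "s ^ (Q * Q) = s"
  proof -
    have "s ^ (Q * Q) = (- v - b) ^ Q" by (simp add: power_mult sQ)
    also have "\<dots> = (- v) ^ Q - b ^ Q" by (rule sub_frob[OF add])
    also have "\<dots> = s" using negQ vQ bQ by (simp add: s_def)
    finally show ?thesis .
  qed
  moreover have "Q * Q \<ge> 1" using k by simp
  ultimately have h: "t ^ (Q * Q - 1) = 1 \<or> t ^ (Q * Q + 1) = 1"
    using frob_fix[OF add2 P(1)] P(2) by simp
  have Q4e: "Q ^ 4 - 1 = (Q * Q - 1) * (Q * Q + 1)"
  proof -
    have q4: "Q ^ 4 = (Q * Q) * (Q * Q)" by (simp add: power_mult[symmetric] power2_eq_square[symmetric] power_mult_distrib)
    obtain r where r: "Q * Q = Suc r" using \<open>Q * Q \<ge> 1\<close> by (cases "Q * Q") auto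
    show ?thesis unfolding q4 r by simp
  qed
  have "t ^ ((Q * Q - 1) * (Q * Q + 1)) = 1"
    using h by (metis pow_dvd_one dvd_triv_left dvd_triv_right)
  then have "t ^ (Q ^ 4 - 1) = 1" unfolding Q4e .
  then have "t ^ gcd (2 * N) (Q ^ 4 - 1) = 1" using pow_gcd_one[OF P(4)] by blast
  then have tQ1: "t ^ (Q - 1) = 1" using cop by (rule pow_dvd_one)
  have tQ: "t ^ Q = t"
  proof -
    have sQ: "Suc (Q - 1) = Q" using k by simp
    have "t ^ Q = t ^ (Q - 1) * t" by (metis sQ power_Suc2)
    then show ?thesis using tQ1 by simp
  qed
  have "s ^ Q = s" using P(2) add[of t "inverse t"] tQ by (simp add: power_inverse)
  then have "- v - b = v - b" using sQ s_def by simp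
  then have "2 * v = 0" by (simp add: algebra_simps)
  then have "v = 0" using two by simp
  then show False using v by simp
qed



definition tt :: "'b::field \<Rightarrow> nat \<Rightarrow> nat \<Rightarrow> 'b" where
  "tt a i j = (if i = j then a else if i = j + 1 \<or> j = i + 1 then 1 else 0)"

lemma tt_sym: "tt a i j = tt a j i"
  unfolding tt_def by auto

lemma tt_sum:
  assumes i: "i < n"
  shows "(\<Sum>m\<in>{0..<n}. tt a i m * y m) = Tm n a y i"
proof -
  have pw: "tt a i m * y m = (if m = i then a * y m else 0) + (if m + 1 = i then y m else 0)
           + (if m = i + 1 then y m else 0)" for m
    unfolding tt_def by auto
  have s1: "(\<Sum>m\<in>{0..<n}. (if m = i then a * y m else 0)) = a * y i"
    using i by (simp add: sum.delta)
  have s2: "(\<Sum>m\<in>{0..<n}. (if m + 1 = i then y m else 0)) = (if 0 < i then y (i - 1) else 0)"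
  proof (cases i)
    case 0 then show ?thesis by simp
  next
    case (Suc i')
    have "(\<Sum>m\<in>{0..<n}. (if m + 1 = i then y m else 0)) = (\<Sum>m\<in>{0..<n}. (if m = i' then y m else 0))"
      using Suc by (intro sum.cong) auto
    also have "\<dots> = y i'" using Suc i by (simp add: sum.delta)
    finally show ?thesis using Suc by simp
  qed
  have s3: "(\<Sum>m\<in>{0..<n}. (if m = i + 1 then y m else 0)) = (if i + 1 < n then y (i + 1) else 0)"
    by (simp add: sum.delta)
  show ?thesis
    unfolding pw sum.distrib s1 s2 s3 Tm_def by (simp add: algebra_simps)
qed

lemma gen_entry:
  assumes "i < n" "j < 2 * n"
  shows "gen_matrix n a $$ (i, j) = (if j < n then (if i = j then 1 else 0) else tt a i (j - n))"
  using assms unfolding gen_matrix_def tridiag_toeplitz_def tt_def by simp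

lemma gen_dims [simp]: "dim_row (gen_matrix n a) = n" "dim_col (gen_matrix n a) = 2 * n"
  unfolding gen_matrix_def by simp_all

lemma mvT:
  fixes G :: "'b::field mat"
  assumes "j < dim_col G" "dim_vec x = dim_row G"
  shows "(transpose_mat G *\<^sub>v x) $ j = (\<Sum>k\<in>{0..<dim_vec x}. G $$ (k, j) * x $ k)"
  using assms by (simp add: scalar_prod_def mult_mat_vec_def)

lemma dual_calc:
  fixes a :: "'b::field"
  assumes x: "x \<in> carrier_vec n" and i: "i < n"
  shows "(transpose_mat (gen_matrix n a) *\<^sub>v unit_vec n i) \<bullet> (transpose_mat (gen_matrix n a) *\<^sub>v x)
       = x $ i + Tm n a (Tm n a (\<lambda>k. x $ k)) i"
proof -
  define G where "G = gen_matrix n a"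
  define c where "c = transpose_mat G *\<^sub>v x"
  define c' where "c' = transpose_mat G *\<^sub>v unit_vec n i"
  have dc: "dim_vec c = 2 * n" by (simp add: c_def G_def)
  have c'j: "c' $ j = G $$ (i, j)" if "j < 2 * n" for j
  proof -
    have "c' $ j = (\<Sum>k\<in>{0..<n}. G $$ (k, j) * unit_vec n i $ k)"
      unfolding c'_def using mvT[of j G "unit_vec n i"] that by (simp add: G_def)
    also have "\<dots> = (\<Sum>k\<in>{0..<n}. (if k = i then G $$ (k, j) else 0))"
      by (intro sum.cong) (auto simp: unit_vec_def)
    also have "\<dots> = G $$ (i, j)" using i by (simp add: sum.delta')
    finally show ?thesis .
  qed
  have cj: "c $ j = (\<Sum>k\<in>{0..<n}. G $$ (k, j) * x $ k)" if "j < 2 * n" for j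
    unfolding c_def using mvT[of j G x] that x by (simp add: G_def)
  have ci: "c $ j = x $ j" if "j < n" for j
  proof -
    have "c $ j = (\<Sum>k\<in>{0..<n}. G $$ (k, j) * x $ k)" using cj[of j] that by simp
    also have "\<dots> = (\<Sum>k\<in>{0..<n}. (if k = j then x $ k else 0))"
      using that by (intro sum.cong) (auto simp: G_def gen_entry)
    also have "\<dots> = x $ j" using that by (simp add: sum.delta')
    finally show ?thesis .
  qed
  have cnm: "c $ (n + m) = Tm n a (\<lambda>k. x $ k) m" if "m < n" for m
  proof -
    have "c $ (n + m) = (\<Sum>k\<in>{0..<n}. G $$ (k, n + m) * x $ k)" using cj[of "n + m"] that by simp
    also have "\<dots> = (\<Sum>k\<in>{0..<n}. tt a m k * x $ k)"
      using that by (intro sum.cong) (auto simp: G_def gen_entry tt_sym)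
    also have "\<dots> = Tm n a (\<lambda>k. x $ k) m" using that by (rule tt_sum)
    finally show ?thesis .
  qed
  have "c' \<bullet> c = (\<Sum>j\<in>{0..<n + n}. c' $ j * c $ j)"
    unfolding scalar_prod_def dc by (simp add: mult_2)
  also have "\<dots> = (\<Sum>j\<in>{0..<n}. c' $ j * c $ j) + (\<Sum>j\<in>{n..<n + n}. c' $ j * c $ j)"
    by (rule sum.atLeastLessThan_concat[symmetric]) auto
  also have "(\<Sum>j\<in>{0..<n}. c' $ j * c $ j) = (\<Sum>j\<in>{0..<n}. (if j = i then x $ j else 0))"
  proof (intro sum.cong refl)
    fix j assume j: "j \<in> {0..<n}"
    have "c' $ j = (if j = i then 1 else 0)" using j i c'j[of j] gen_entry[of i n j a] by (auto simp: G_def)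
    then show "c' $ j * c $ j = (if j = i then x $ j else 0)" using ci[of j] j by simp
  qed
  also have "\<dots> = x $ i" using i by (simp add: sum.delta')
  also have "(\<Sum>j\<in>{n..<n + n}. c' $ j * c $ j) = (\<Sum>m\<in>{0..<n}. c' $ (m + n) * c $ (m + n))"
    using sum.shift_bounds_nat_ivl[of "\<lambda>j. c' $ j * c $ j" 0 n n] by simp
  also have "\<dots> = (\<Sum>m\<in>{0..<n}. tt a i m * Tm n a (\<lambda>k. x $ k) m)"
  proof (intro sum.cong refl)
    fix m assume m: "m \<in> {0..<n}"
    have "c' $ (m + n) = tt a i m" using m i c'j[of "m + n"] gen_entry[of i n "m + n" a] by (simp add: G_def)
    moreover have "c $ (m + n) = Tm n a (\<lambda>k. x $ k) m" using m cnm[of m] by (simp add: add.commute)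
    ultimately show "c' $ (m + n) * c $ (m + n) = tt a i m * Tm n a (\<lambda>k. x $ k) m" by simp
  qed
  also have "\<dots> = Tm n a (Tm n a (\<lambda>k. x $ k)) i" using i by (rule tt_sum)
  finally show ?thesis by (simp add: c_def c'_def G_def)
qed

lemma LCD_reduce:
  fixes a :: "'b::field"
  assumes H: "\<And>Xv. (\<forall>i<n. Xv i + Tm n a (Tm n a Xv) i = 0) \<Longrightarrow> (\<forall>i<n. Xv i = 0)"
  shows "is_LCD (2 * n) (C_code n a)"
proof -
  define G where "G = gen_matrix n a"
  have dG: "dim_row G = n" "dim_col G = 2 * n" by (simp_all add: G_def)
  have carr: "transpose_mat G *\<^sub>v x \<in> carrier_vec (2 * n)" for x
    by (rule carrier_vecI) (simp only: dim_mult_mat_vec index_transpose_mat dG)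
  have zero: "transpose_mat G *\<^sub>v 0\<^sub>v n = 0\<^sub>v (2 * n)"
  proof (rule eq_vecI)
    fix j assume j: "j < dim_vec (0\<^sub>v (2 * n) :: 'b vec)"
    then have j': "j < dim_col G" using dG by simp
    have e: "(transpose_mat G *\<^sub>v 0\<^sub>v n) $ j = (\<Sum>k\<in>{0..<dim_vec (0\<^sub>v n :: 'b vec)}. G $$ (k, j) * (0\<^sub>v n :: 'b vec) $ k)"
      by (rule mvT[OF j']) (simp only: dG index_zero_vec)
    have "(\<Sum>k\<in>{0..<dim_vec (0\<^sub>v n :: 'b vec)}. G $$ (k, j) * (0\<^sub>v n :: 'b vec) $ k) = 0"
      by (intro sum.neutral ballI) simp
    then show "(transpose_mat G *\<^sub>v 0\<^sub>v n) $ j = (0\<^sub>v (2 * n) :: 'b vec) $ j" using j e by simp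
  next
    show "dim_vec (transpose_mat G *\<^sub>v 0\<^sub>v n) = dim_vec (0\<^sub>v (2 * n) :: 'b vec)"
      by (simp only: dim_mult_mat_vec index_transpose_mat dG index_zero_vec)
  qed
  have C0: "C_code n a = {transpose_mat G *\<^sub>v x | x. x \<in> carrier_vec (dim_row G)}"
    unfolding C_code_def code_of_def G_def by (rule refl)
  have C: "C_code n a = {transpose_mat G *\<^sub>v x | x. x \<in> carrier_vec n}"
    unfolding C0 dG(1) by (rule refl)
  show ?thesis
    unfolding is_LCD_def
  proof (intro equalityI subsetI)
    fix c assume c: "c \<in> C_code n a \<inter> dual_code (2 * n) (C_code n a)"
    then have "c \<in> {transpose_mat G *\<^sub>v x | x. x \<in> carrier_vec n}" using C by blast
    then obtain x where x: "x \<in> carrier_vec n" and cx: "c = transpose_mat G *\<^sub>v x"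
      by blast
    have dual: "\<forall>c'\<in>C_code n a. c' \<bullet> c = 0"
      using c unfolding dual_code_def by blast
    have "\<forall>i<n. x $ i + Tm n a (Tm n a (\<lambda>k. x $ k)) i = 0"
    proof (intro allI impI)
      fix i assume i: "i < n"
      have "transpose_mat G *\<^sub>v unit_vec n i \<in> C_code n a"
        unfolding C using unit_vec_carrier[of n i] by blast
      then have "(transpose_mat G *\<^sub>v unit_vec n i) \<bullet> c = 0"
        using dual by blast
      then have z: "(transpose_mat G *\<^sub>v unit_vec n i) \<bullet> (transpose_mat G *\<^sub>v x) = 0"
        by (simp only: cx)
      have eq: "(transpose_mat G *\<^sub>v unit_vec n i) \<bullet> (transpose_mat G *\<^sub>v x)
          = x $ i + Tm n a (Tm n a (\<lambda>k. x $ k)) i"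
        using dual_calc[OF x i, of a, folded G_def] .
      show "x $ i + Tm n a (Tm n a (\<lambda>k. x $ k)) i = 0"
        using z unfolding eq .
    qed
    then have x0: "\<forall>i<n. x $ i = 0" by (rule H)
    have "x = 0\<^sub>v n"
    proof (rule eq_vecI)
      fix i assume "i < dim_vec (0\<^sub>v n :: 'b vec)"
      then have "i < n" by simp
      then show "x $ i = (0\<^sub>v n :: 'b vec) $ i" using x0 by simp
    next
      show "dim_vec x = dim_vec (0\<^sub>v n :: 'b vec)" using x by simp
    qed
    then show "c \<in> {0\<^sub>v (2 * n)}" by (simp only: cx zero singleton_iff)
  next
    fix c :: "'b vec" assume "c \<in> {0\<^sub>v (2 * n)}"
    then have c0: "c = 0\<^sub>v (2 * n)" by simp
    have "c \<in> C_code n a" unfolding C c0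
      by (rule CollectI, rule exI[of _ "0\<^sub>v n"]) (simp add: zero)
    moreover have "c \<in> dual_code (2 * n) (C_code n a)"
    proof -
      have "c' \<bullet> 0\<^sub>v (2 * n) = 0" if "c' \<in> C_code n a" for c'
      proof -
        from that obtain y where "c' = transpose_mat G *\<^sub>v y" unfolding C by blast
        then have "c' \<in> carrier_vec (2 * n)" using carr by simp
        then show ?thesis by (rule scalar_prod_right_zero)
      qed
      then show ?thesis unfolding dual_code_def c0 by auto
    qed
    ultimately show "c \<in> C_code n a \<inter> dual_code (2 * n) (C_code n a)" by simp
  qed
qed



lemma Tm_ac: "Tm n (to_ac a) (\<lambda>i. to_ac (f i)) = (\<lambda>i. to_ac (Tm n a f i))"
  by (rule ext) (simp add: Tm_def)

lemma gcd2: "coprime (N::nat) m \<Longrightarrow> gcd (2 * N) m dvd 2"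
  by (metis coprime_commute coprime_divisors coprime_dvd_mult_left_iff dvd_refl gcd_dvd1 gcd_dvd2)

lemma kernel_zero:
  fixes a :: "'a::{finite,field}" and Xv :: "nat \<Rightarrow> 'a"
  assumes q: "q = card (UNIV :: 'a set)" and oq: "odd q"
    and cop: "coprime (n + 1) q"
    and cases: "(q mod 4 = 1 \<and> (\<forall>m. m = q - 1 \<or> m = q + 1 \<longrightarrow> gcd (2 * (n + 1)) m dvd 2))
               \<or> (q mod 4 = 3 \<and> gcd (2 * (n + 1)) (q ^ 4 - 1) dvd q - 1)"
    and eq: "\<forall>i<n. Xv i + Tm n a (Tm n a Xv) i = 0"
  shows "\<forall>i<n. Xv i = 0"
proof (rule ccontr)
  assume "\<not> (\<forall>i<n. Xv i = 0)"
  then obtain i0 where i0: "i0 < n" "Xv i0 \<noteq> 0" by blast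
  define b where "b = (to_ac a :: 'a alg_closure)"
  define Y where "Y = (\<lambda>i. to_ac (Xv i) :: 'a alg_closure)"
  have TY: "Tm n b (Tm n b Y) = (\<lambda>i. to_ac (Tm n a (Tm n a Xv) i))"
    unfolding b_def Y_def Tm_ac ..
  have eqY: "Y i + Tm n b (Tm n b Y) i = 0" if "i < n" for i
  proof -
    have "Y i + Tm n b (Tm n b Y) i = to_ac (Xv i + Tm n a (Tm n a Xv) i)"
      using fun_cong[OF TY, of i] by (simp add: Y_def)
    then show ?thesis using eq that by simp
  qed
  have Y0: "Y i0 \<noteq> 0" using i0 by (simp add: Y_def)
  obtain lm :: "'a alg_closure" where lm: "lm ^ 2 = -1"
  proof -
    have "\<exists>x. poly [:1, 0, 1 :: 'a alg_closure:] x = 0"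
      by (rule alg_closed_imp_poly_has_root) simp
    then obtain x :: "'a alg_closure" where "poly [:1, 0, 1:] x = 0" by blast
    then have "x ^ 2 = -1" by (simp add: power2_eq_square algebra_simps add_eq_0_iff)
    then show ?thesis using that by blast
  qed
  obtain v where v: "v ^ 2 = -1" "Eseq (v - b) (n + 1) = 0"
    using sq_eigen[OF eqY i0(1) Y0 lm] by blast
  obtain t :: "'a alg_closure" where r: "t * t - (v - b) * t + 1 = 0"
  proof -
    have "\<exists>x. poly [:1, -(v - b), 1 :: 'a alg_closure:] x = 0"
      by (rule alg_closed_imp_poly_has_root) simp
    then obtain x :: "'a alg_closure" where "poly [:1, -(v - b), 1:] x = 0" by blast
    then have "x * x - (v - b) * x + 1 = 0" by (simp add: algebra_simps)
    then show ?thesis using that by blast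
  qed
  define p where "p = CHAR('a)"
  have pp: "normalization_semidom_class.prime p" unfolding p_def by (rule prime_CHAR_semidom) (simp add: finite_imp_CHAR_pos)
  have pK: "CHAR('a alg_closure) = p" by (simp add: p_def)
  obtain k where qk: "q = p ^ k" using card_prime_power[where 'a='a] q p_def by blast
  have add: "(x + y) ^ q = x ^ q + y ^ q" for x y :: "'a alg_closure"
    by (rule freshmans_dream'[where n=k]) (use pp in \<open>simp_all add: qk p_def\<close>)
  have bQ: "b ^ q = b" unfolding b_def q by (simp flip: to_ac_power add: finite_field_pow_card)
  have pq: "p dvd q" unfolding q p_def by (rule CHAR_dvd_CARD)
  have N: "of_nat (n + 1) \<noteq> (0 :: 'a alg_closure)"
  proof
    assume "of_nat (n + 1) = (0 :: 'a alg_closure)"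
    then have "CHAR('a alg_closure) dvd n + 1" by (simp only: of_nat_eq_0_iff_char_dvd)
    then have "p dvd n + 1" using pK by simp
    then have "p dvd 1" using pq cop by (metis coprime_common_divisor)
    then show False using pp by simp
  qed
  from cases show False
  proof
    assume c1: "q mod 4 = 1 \<and> (\<forall>m. m = q - 1 \<or> m = q + 1 \<longrightarrow> gcd (2 * (n + 1)) m dvd 2)"
    show False
      by (rule core_i[OF add bQ v(1) _ v(2) N r]) (use c1 in auto)
  next
    assume c2: "q mod 4 = 3 \<and> gcd (2 * (n + 1)) (q ^ 4 - 1) dvd q - 1"
    have two: "(2 :: 'a alg_closure) \<noteq> 0"
    proof
      assume "(2 :: 'a alg_closure) = 0"
      then have "of_nat 2 = (0 :: 'a alg_closure)" by simp
      then have "CHAR('a alg_closure) dvd 2" by (simp only: of_nat_eq_0_iff_char_dvd)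
      then have "p dvd 2" using pK by simp
      moreover have "coprime 2 q" using oq by simp
      ultimately have "p dvd 1" using pq by (metis coprime_common_divisor)
      then show False using pp by simp
    qed
    show False
      by (rule core_ii[OF add bQ v(1) _ v(2) N r two]) (use c2 in auto)
  qed
qed


theorem corollary2p4:
  fixes q n :: nat
  assumes q: "q = card (UNIV :: 'a::{finite,field} set)"
    and odd_q: "odd q"
    and n: "n \<ge> 1"
  shows "(q mod 4 = 1 \<and> gcd (n + 1) (q * (q^2 - 1) div 2) = 1 \<longrightarrow>
           (\<forall>\<mu>::'a. \<mu>^2 = -1 \<longrightarrow>
              (\<forall>a::'a. a \<notin> {\<mu> + 2, -\<mu> + 2, \<mu> - 2, -\<mu> - 2} \<longrightarrow>
                 is_LCD (2*n) (C_code n a))))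
       \<and> (q mod 4 = 3 \<and> gcd (n + 1) q = 1 \<and>
            gcd (n + 1) ((q^4 - 1) div 2) dvd (q - 1) div 2 \<longrightarrow>
           (\<forall>a::'a. is_LCD (2*n) (C_code n a)))"
proof (intro conjI impI allI)
  fix \<mu> a :: 'a
  assume h: "q mod 4 = 1 \<and> gcd (n + 1) (q * (q^2 - 1) div 2) = 1"
  obtain j where qj: "q = 2 * j + 1" using odd_q by (auto elim: oddE)
  have sq: "q ^ 2 - 1 = 4 * j * (j + 1)" unfolding qj by (simp add: power2_eq_square algebra_simps)
  have B: "q * (q^2 - 1) div 2 = q * (2 * j * (j + 1))"
  proof -
    have e: "q * (q^2 - 1) = 2 * (q * (2 * j * (j + 1)))" unfolding sq by (simp add: algebra_simps)
    show ?thesis unfolding e by simp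
  qed
  have copB: "coprime (n + 1) (q * (2 * j * (j + 1)))" using h B by (simp add: coprime_iff_gcd_eq_1)
  have cop: "coprime (n + 1) q" using copB by simp
  have c1: "coprime (n + 1) (q - 1)"
  proof -
    have "q * (2 * j * (j + 1)) = (q - 1) * (q * (j + 1))" unfolding qj by (simp add: algebra_simps)
    then show ?thesis using copB by simp
  qed
  have c2: "coprime (n + 1) (q + 1)"
  proof -
    have e: "q * (2 * j * (j + 1)) = (q + 1) * (q * j)" unfolding qj by (simp add: algebra_simps)
    have "coprime (n + 1) ((q + 1) * (q * j))" using copB by (simp only: e)
    then show ?thesis by (simp only: coprime_mult_right_iff)
  qed
  show "is_LCD (2 * n) (C_code n a)"
  proof (rule LCD_reduce)
    fix Xv assume eq: "\<forall>i<n. Xv i + Tm n a (Tm n a Xv) i = 0"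
    show "\<forall>i<n. Xv i = 0"
    proof (rule kernel_zero[OF q odd_q cop _ eq])
      show "(q mod 4 = 1 \<and> (\<forall>m. m = q - 1 \<or> m = q + 1 \<longrightarrow> gcd (2 * (n + 1)) m dvd 2))
               \<or> (q mod 4 = 3 \<and> gcd (2 * (n + 1)) (q ^ 4 - 1) dvd q - 1)"
        using h c1 c2 gcd2 by blast
    qed
  qed
next
  fix a :: 'a
  assume h: "q mod 4 = 3 \<and> gcd (n + 1) q = 1 \<and> gcd (n + 1) ((q^4 - 1) div 2) dvd (q - 1) div 2"
  have cop: "coprime (n + 1) q" using h by (simp add: coprime_iff_gcd_eq_1)
  have ev4: "even (q ^ 4 - 1)" using odd_q by simp
  have ev1: "even (q - 1)" using odd_q by simp
  have "gcd (2 * (n + 1)) (q ^ 4 - 1) = gcd (2 * (n + 1)) (2 * ((q ^ 4 - 1) div 2))"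
    using ev4 by simp
  also have "\<dots> = 2 * gcd (n + 1) ((q ^ 4 - 1) div 2)" by (simp add: gcd_mult_distrib_nat)
  finally have g: "gcd (2 * (n + 1)) (q ^ 4 - 1) = 2 * gcd (n + 1) ((q ^ 4 - 1) div 2)" .
  have "2 * gcd (n + 1) ((q ^ 4 - 1) div 2) dvd 2 * ((q - 1) div 2)" using h by simp
  also have "2 * ((q - 1) div 2) = q - 1" using ev1 by simp
  finally have gd: "gcd (2 * (n + 1)) (q ^ 4 - 1) dvd q - 1" using g by simp
  show "is_LCD (2 * n) (C_code n a)"
  proof (rule LCD_reduce)
    fix Xv assume eq: "\<forall>i<n. Xv i + Tm n a (Tm n a Xv) i = 0"
    show "\<forall>i<n. Xv i = 0"
      by (rule kernel_zero[OF q odd_q cop _ eq]) (use h gd in blast)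
  qed
qed

end
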